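(* Consider non-adaptive group testing of $N$ items with an unknown defective set $S\subset\{1,\dots,N\}$ of known size $|S|=K$, using $T$ tests with a random design whose entries are i.i.d. with law $Q$ on $\{0,1\}$, outcomes generated by a memoryless test channel with per-test law $p(y\mid x_S)$, and maximum-likelihood decoding. For $i\in\{1,\dots,K\}$ let $\Xi_S^{\{i\}}$ be the set of pairs $(\mathcal S^1,\mathcal S^2)$ of disjoint sets with $\mathcal S^1\cup\mathcal S^2=S$, $|\mathcal S^1|=i$, $|\mathcal S^2|=K-i$. Then a sufficient condition on $T$ for the average error probability to be arbitrarily small is $$T>\max_{i\in\{1,\dots,K\},\ (\mathcal S^1,\mathcal S^2)\in\Xi_S^{\{i\}}}\ \frac{\log\left(K\binom{N-K}{i}\binom{K}{i}\right)}{I(X_{\mathcal S^1};X_{\mathcal S^2},Y)}.$$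
   Context: Setup. A design with $T$ tests is an $N\times T$ binary matrix (codebook) whose $j$-th row $X_j^T\in\{0,1\}^T$ (the codeword of item $j$) has $X_j(t)=1$ iff item $j$ is included in test $t$. The codebook is random: all entries are i.i.d. with a common law $Q$ on $\{0,1\}$ (for a set $A$ of items and a matrix/vector of their entries, $Q(\cdot)$ denotes the corresponding product probability). For a set $A$ of items, $\mathbf X_A$ denotes the $|A|\times T$ submatrix of rows in $A$, and $X_A(t)\in\{0,1\}^{|A|}$ its $t$-th column. Given the defective set $S$, the outcome $Y^T=(Y(1),\dots,Y(T))$ has law $p(Y^T\mid \mathbf X_S)=\prod_{t=1}^T p(Y(t)\mid X_S(t))$ for a fixed per-test transition law $p(y\mid x_S)$ on a finite output alphabet (e.g. $Y(t)=\bigvee_{j\in S}X_j(t)$ in the noiseless case). The ML decoder outputs a $K$-subset $S'$ maximizing $p(Y^T\mid\mathbf X_{S'})$ over all $\binom{N}{K}$ $K$-subsets. The average error probability is the probability that the decoded set differs from the true one, averaged over the random codebook and over the defective set chosen uniformly among all $K$-subsets. In the mutual information, $X_S=(X_{\mathcal S^1},X_{\mathcal S^2})$ is a single per-test input vector with i.i.d. $Q$ entries and $Y$ is the corresponding per-test outcome with law $p(\cdot\mid X_S)$; $\log$ is base 2. *)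

theory Defs
  imports Complex_Main "HOL-Library.FuncSet" "HOL-Combinatorics.Permutations"
begin

definition Qp :: "real \<Rightarrow> 'a set \<Rightarrow> ('a \<Rightarrow> bool) \<Rightarrow> real" where
  "Qp q A x = (\<Prod>j\<in>A. if x j then q else 1 - q)"

definition finite_mi :: "'u set \<Rightarrow> 'v set \<Rightarrow> ('u \<Rightarrow> 'v \<Rightarrow> real) \<Rightarrow> real" where
  "finite_mi U V P =
     (\<Sum>u\<in>U. \<Sum>v\<in>V. if P u v = 0 then 0
        else P u v * log 2 (P u v / ((\<Sum>v'\<in>V. P u v') * (\<Sum>u'\<in>U. P u' v))))"

text \<open>Per-test input vector X_S = (X_1..X_K) indexed by positions 0..K-1, i.i.d. Q;
  Y ~ W(X_S, .). For a set A of positions (playing S^1) and B = its complement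
  (playing S^2): I(X_A ; X_B, Y).\<close>
definition mi_split :: "real \<Rightarrow> nat \<Rightarrow> ((nat \<Rightarrow> bool) \<Rightarrow> 'y::finite \<Rightarrow> real) \<Rightarrow> nat set \<Rightarrow> real" where
  "mi_split q K W A =
     (let B = {..<K} - A in
      finite_mi (PiE A (\<lambda>_. UNIV)) (PiE B (\<lambda>_. UNIV) \<times> (UNIV :: 'y set))
        (\<lambda>u (v, y). Qp q A u * Qp q B v *
            W (\<lambda>j. if j \<in> A then u j else if j \<in> B then v j else False) y))"

text \<open>Codebook X :: item x test -> bool on {..<N} x {..<T}. Input of test t for set S.\<close>
definition test_input :: "nat set \<Rightarrow> (nat \<times> nat \<Rightarrow> bool) \<Rightarrow> nat \<Rightarrow> nat \<Rightarrow> bool" where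
  "test_input S X t = (\<lambda>k. if k < card S then X (sorted_list_of_set S ! k, t) else False)"

definition lik :: "nat \<Rightarrow> ((nat \<Rightarrow> bool) \<Rightarrow> 'y \<Rightarrow> real) \<Rightarrow> nat set
                    \<Rightarrow> (nat \<times> nat \<Rightarrow> bool) \<Rightarrow> (nat \<Rightarrow> 'y) \<Rightarrow> real" where
  "lik T W S X ys = (\<Prod>t<T. W (test_input S X t) (ys t))"

definition codebooks :: "nat \<Rightarrow> nat \<Rightarrow> (nat \<times> nat \<Rightarrow> bool) set" where
  "codebooks N T = PiE ({..<N} \<times> {..<T}) (\<lambda>_. UNIV)"

text \<open>ML decoding error (ties counted as errors): some other K-subset S' has
  likelihood at least that of the true S.\<close>
definition ml_error :: "nat \<Rightarrow> nat \<Rightarrow> ((nat \<Rightarrow> bool) \<Rightarrow> 'y \<Rightarrow> real) \<Rightarrow> nat set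
                         \<Rightarrow> (nat \<times> nat \<Rightarrow> bool) \<Rightarrow> (nat \<Rightarrow> 'y) \<Rightarrow> bool" where
  "ml_error N T W S X ys =
     (\<exists>S'. S' \<subseteq> {..<N} \<and> card S' = card S \<and> S' \<noteq> S \<and> lik T W S' X ys \<ge> lik T W S X ys)"

definition avg_err :: "real \<Rightarrow> ((nat \<Rightarrow> bool) \<Rightarrow> 'y::finite \<Rightarrow> real) \<Rightarrow> nat \<Rightarrow> nat \<Rightarrow> nat \<Rightarrow> real" where
  "avg_err q W N K T =
     (\<Sum>S\<in>{S. S \<subseteq> {..<N} \<and> card S = K}.
        \<Sum>X\<in>codebooks N T. Qp q ({..<N} \<times> {..<T}) X *
          (\<Sum>ys\<in>PiE {..<T} (\<lambda>_. (UNIV :: 'y set)).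
             lik T W S X ys * (if ml_error N T W S X ys then 1 else 0)))
     / real (N choose K)"

end

theory Submission
  imports Defs "HOL-Analysis.Convex" "HOL-Combinatorics.Permutations"
begin


lemma Qp_nonneg: "0 \<le> q \<Longrightarrow> q \<le> 1 \<Longrightarrow> 0 \<le> Qp q A x"
  unfolding Qp_def by (intro prod_nonneg) auto

lemma sum_Qp:
  assumes "finite A"
  shows "(\<Sum>x\<in>PiE A (\<lambda>_. UNIV). Qp q A x) = 1"
proof -
  have "(\<Sum>x\<in>PiE A (\<lambda>_. UNIV). Qp q A x) = (\<Prod>j\<in>A. \<Sum>b\<in>(UNIV::bool set). if b then q else 1 - q)"
    unfolding Qp_def by (subst prod_sum_PiE) (use assms in auto)
  also have "\<dots> = 1" by (simp add: UNIV_bool)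
  finally show ?thesis .
qed

lemma split_PiE:
  fixes g :: "('i \<Rightarrow> bool) \<Rightarrow> real"
  assumes "finite I" "finite J" "I \<inter> J = {}"
  shows "(\<Sum>X\<in>PiE (I \<union> J) (\<lambda>_. UNIV). g X) =
    (\<Sum>a\<in>PiE I (\<lambda>_. UNIV). \<Sum>b\<in>PiE J (\<lambda>_. UNIV). g (\<lambda>x. if x \<in> I then a x else b x))"
proof -
  have "(\<Sum>a\<in>PiE I (\<lambda>_. UNIV). \<Sum>b\<in>PiE J (\<lambda>_. UNIV). g (\<lambda>x. if x \<in> I then a x else b x))
     = (\<Sum>(a,b)\<in>PiE I (\<lambda>_. UNIV) \<times> PiE J (\<lambda>_. UNIV). g (\<lambda>x. if x \<in> I then a x else b x))"
    by (rule sum.cartesian_product)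
  also have "\<dots> = (\<Sum>X\<in>PiE (I \<union> J) (\<lambda>_. UNIV). g X)"
    apply (rule sum.reindex_bij_witness[of _ "\<lambda>X. (restrict X I, restrict X J)"
          "\<lambda>(a,b) x. if x \<in> I then a x else b x"])
    using assms by (auto simp: PiE_def extensional_def restrict_def fun_eq_iff)
  finally show ?thesis by simp
qed

lemma Qp_split:
  assumes "finite I" "finite J" "I \<inter> J = {}"
  shows "Qp q (I \<union> J) (\<lambda>x. if x \<in> I then a x else b x) = Qp q I a * Qp q J b"
  unfolding Qp_def using assms
  by (subst prod.union_disjoint) (auto intro!: arg_cong2[where f="(*)"] prod.cong)

lemma reindex_PiE:
  fixes \<psi> :: "('p \<Rightarrow> bool) \<Rightarrow> real" and h :: "'p \<Rightarrow> 'i"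
  assumes "finite P" "inj_on h P"
    and dep: "\<And>u u'. (\<forall>k\<in>P. u k = u' k) \<Longrightarrow> \<psi> u = \<psi> u'"
  shows "(\<Sum>a\<in>PiE (h ` P) (\<lambda>_. UNIV). Qp q (h ` P) a * \<psi> (\<lambda>k. a (h k)))
       = (\<Sum>u\<in>PiE P (\<lambda>_. UNIV). Qp q P u * \<psi> u)"
proof (rule sum.reindex_bij_witness[of _ "\<lambda>u. restrict (\<lambda>x. u (inv_into P h x)) (h ` P)"
          "\<lambda>a. restrict (\<lambda>k. a (h k)) P"])
  fix a :: "'i \<Rightarrow> bool" assume a: "a \<in> PiE (h ` P) (\<lambda>_. UNIV)"
  show "restrict (\<lambda>x. restrict (\<lambda>k. a (h k)) P (inv_into P h x)) (h ` P) = a"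
    using a assms(2) by (auto simp: PiE_def extensional_def restrict_def fun_eq_iff inv_into_into)
  show "restrict (\<lambda>k. a (h k)) P \<in> PiE P (\<lambda>_. UNIV)" by auto
  have "Qp q (h ` P) a = Qp q P (restrict (\<lambda>k. a (h k)) P)"
    unfolding Qp_def using assms(2) by (subst prod.reindex) auto
  moreover have "\<psi> (\<lambda>k. a (h k)) = \<psi> (restrict (\<lambda>k. a (h k)) P)"
    by (rule dep) auto
  ultimately show "Qp q P (restrict (\<lambda>k. a (h k)) P) * \<psi> (restrict (\<lambda>k. a (h k)) P) =
         Qp q (h ` P) a * \<psi> (\<lambda>k. a (h k))" by simp
next
  fix u assume u: "u \<in> PiE P (\<lambda>_. UNIV)"
  show "restrict (\<lambda>k. restrict (\<lambda>x. u (inv_into P h x)) (h ` P) (h k)) P = u"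
    using u assms(2) by (auto simp: PiE_def extensional_def restrict_def fun_eq_iff)
  show "restrict (\<lambda>x. u (inv_into P h x)) (h ` P) \<in> PiE (h ` P) (\<lambda>_. UNIV)" by auto
qed

lemma indep_blocks:
  fixes h :: "'t \<Rightarrow> 'p \<Rightarrow> 'i" and \<phi> :: "'t \<Rightarrow> ('p \<Rightarrow> bool) \<Rightarrow> real"
  assumes "finite Ts" "finite I" "finite P"
    and inj: "\<And>t. t \<in> Ts \<Longrightarrow> inj_on (h t) P"
    and sub: "\<And>t. t \<in> Ts \<Longrightarrow> h t ` P \<subseteq> I"
    and disj: "\<And>t t'. t \<in> Ts \<Longrightarrow> t' \<in> Ts \<Longrightarrow> t \<noteq> t' \<Longrightarrow> h t ` P \<inter> h t' ` P = {}"
    and dep: "\<And>t u u'. (\<forall>k\<in>P. u k = u' k) \<Longrightarrow> \<phi> t u = \<phi> t u'"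
  shows "(\<Sum>X\<in>PiE I (\<lambda>_. UNIV). Qp q I X * (\<Prod>t\<in>Ts. \<phi> t (\<lambda>k. X (h t k))))
       = (\<Prod>t\<in>Ts. \<Sum>u\<in>PiE P (\<lambda>_. UNIV). Qp q P u * \<phi> t u)"
  using assms(1,2) inj sub disj
proof (induction Ts arbitrary: I rule: finite_induct)
  case empty
  then show ?case by (simp add: sum_Qp)
next
  case (insert t0 Ts)
  define H where "H = h t0 ` P"
  define R where "R = I - H"
  have HI: "H \<subseteq> I" using insert.prems unfolding H_def by auto
  have I: "I = H \<union> R" "H \<inter> R = {}" unfolding R_def using HI by auto
  have fin: "finite H" "finite R" using insert.prems(1) HI unfolding R_def by (auto intro: finite_subset)
  have "(\<Sum>X\<in>PiE I (\<lambda>_. UNIV). Qp q I X * (\<Prod>t\<in>insert t0 Ts. \<phi> t (\<lambda>k. X (h t k))))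
    = (\<Sum>a\<in>PiE H (\<lambda>_. UNIV). \<Sum>b\<in>PiE R (\<lambda>_. UNIV).
        (Qp q H a * \<phi> t0 (\<lambda>k. a (h t0 k))) * (Qp q R b * (\<Prod>t\<in>Ts. \<phi> t (\<lambda>k. b (h t k)))))"
  proof -
    have "(\<Sum>X\<in>PiE I (\<lambda>_. UNIV). Qp q I X * (\<Prod>t\<in>insert t0 Ts. \<phi> t (\<lambda>k. X (h t k))))
      = (\<Sum>a\<in>PiE H (\<lambda>_. UNIV). \<Sum>b\<in>PiE R (\<lambda>_. UNIV).
         Qp q (H \<union> R) (\<lambda>x. if x \<in> H then a x else b x) *
          (\<Prod>t\<in>insert t0 Ts. \<phi> t (\<lambda>k. (\<lambda>x. if x \<in> H then a x else b x) (h t k))))"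
      unfolding I(1) by (rule split_PiE[OF fin I(2)])
    also have "\<dots> = (\<Sum>a\<in>PiE H (\<lambda>_. UNIV). \<Sum>b\<in>PiE R (\<lambda>_. UNIV).
        (Qp q H a * \<phi> t0 (\<lambda>k. a (h t0 k))) * (Qp q R b * (\<Prod>t\<in>Ts. \<phi> t (\<lambda>k. b (h t k)))))"
    proof (intro sum.cong refl)
      fix a b
      have e1: "\<phi> t0 (\<lambda>k. if h t0 k \<in> H then a (h t0 k) else b (h t0 k)) = \<phi> t0 (\<lambda>k. a (h t0 k))"
        by (rule dep) (auto simp: H_def)
      have e2: "\<phi> t (\<lambda>k. if h t k \<in> H then a (h t k) else b (h t k)) = \<phi> t (\<lambda>k. b (h t k))"
        if "t \<in> Ts" for t
      proof (rule dep, intro ballI)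
        fix k assume "k \<in> P"
        have "h t ` P \<inter> h t0 ` P = {}" using insert.prems(4)[of t t0] that insert.hyps by auto
        then have "h t k \<notin> H" using \<open>k \<in> P\<close> unfolding H_def by auto
        then show "(if h t k \<in> H then a (h t k) else b (h t k)) = b (h t k)" by simp
      qed
      show "Qp q (H \<union> R) (\<lambda>x. if x \<in> H then a x else b x) *
          (\<Prod>t\<in>insert t0 Ts. \<phi> t (\<lambda>k. (\<lambda>x. if x \<in> H then a x else b x) (h t k))) =
        (Qp q H a * \<phi> t0 (\<lambda>k. a (h t0 k))) * (Qp q R b * (\<Prod>t\<in>Ts. \<phi> t (\<lambda>k. b (h t k))))"
        using insert.hyps by (simp add: Qp_split[OF fin I(2)] e1 e2 cong: prod.cong)
    qed
    finally show ?thesis .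
  qed
  also have "\<dots> = (\<Sum>a\<in>PiE H (\<lambda>_. UNIV). Qp q H a * \<phi> t0 (\<lambda>k. a (h t0 k))) *
       (\<Sum>b\<in>PiE R (\<lambda>_. UNIV). Qp q R b * (\<Prod>t\<in>Ts. \<phi> t (\<lambda>k. b (h t k))))"
    by (simp add: sum_product)
  also have "(\<Sum>a\<in>PiE H (\<lambda>_. UNIV). Qp q H a * \<phi> t0 (\<lambda>k. a (h t0 k)))
      = (\<Sum>u\<in>PiE P (\<lambda>_. UNIV). Qp q P u * \<phi> t0 u)"
    unfolding H_def by (rule reindex_PiE) (use assms(3) insert.prems dep in auto)
  also have "(\<Sum>b\<in>PiE R (\<lambda>_. UNIV). Qp q R b * (\<Prod>t\<in>Ts. \<phi> t (\<lambda>k. b (h t k))))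
      = (\<Prod>t\<in>Ts. \<Sum>u\<in>PiE P (\<lambda>_. UNIV). Qp q P u * \<phi> t u)"
  proof (rule insert.IH)
    show "finite R" by (rule fin)
    show "inj_on (h t) P" if "t \<in> Ts" for t using insert.prems that by auto
    show "h t ` P \<subseteq> R" if "t \<in> Ts" for t
    proof -
      have "h t ` P \<inter> h t0 ` P = {}" using insert.prems(4)[of t t0] that insert.hyps by auto
      then show ?thesis using insert.prems(3)[of t] that unfolding R_def H_def by auto
    qed
    show "h t ` P \<inter> h t' ` P = {}" if "t \<in> Ts" "t' \<in> Ts" "t \<noteq> t'" for t t'
      using insert.prems(4) that by auto
  qed
  finally show ?case using insert.hyps by simp
qed



lemma deriv_w:
  fixes w :: real assumes "w \<ge> 0"
  shows "((\<lambda>\<rho>. w powr (1/(1+\<rho>))) has_real_derivative (-(w * ln w))) (at 0)"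
proof (cases "w = 0")
  case True
  then show ?thesis by simp
next
  case False
  then have wp: "w > 0" using assms by simp
  have d: "((\<lambda>\<rho>::real. 1/(1+\<rho>)) has_real_derivative (-1)) (at 0)"
    by (auto intro!: derivative_eq_intros)
  have "((\<lambda>\<rho>. w powr (1/(1+\<rho>))) has_real_derivative
      (w powr (1/(1+0)) * ((-1) * ln w + 0 * (1/(1+0)) / w))) (at 0)"
    using DERIV_powr[OF DERIV_const wp d] by simp
  then show ?thesis using wp by simp
qed

lemma deriv_G:
  fixes c w :: "'u \<Rightarrow> real"
  assumes "finite U" "\<And>u. u \<in> U \<Longrightarrow> c u \<ge> 0" "\<And>u. u \<in> U \<Longrightarrow> w u \<ge> 0"
  shows "((\<lambda>\<rho>. (\<Sum>u\<in>U. c u * w u powr (1/(1+\<rho>))) powr (1+\<rho>)) has_real_derivative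
     ((\<Sum>u\<in>U. c u * w u) * ln (\<Sum>u\<in>U. c u * w u) - (\<Sum>u\<in>U. c u * (w u * ln (w u))))) (at 0)"
proof -
  define G where "G = (\<lambda>\<rho>. \<Sum>u\<in>U. c u * w u powr (1/(1+\<rho>)))"
  define G0 where "G0 = (\<Sum>u\<in>U. c u * w u)"
  define G1 where "G1 = (\<Sum>u\<in>U. c u * (-(w u * ln (w u))))"
  have G00: "G 0 = G0" unfolding G_def G0_def using assms(3) by (intro sum.cong) auto
  have dG: "(G has_real_derivative G1) (at 0)"
    unfolding G_def G1_def
    by (intro DERIV_sum DERIV_cmult deriv_w assms(3))
  have G1': "G1 = - (\<Sum>u\<in>U. c u * (w u * ln (w u)))"
    unfolding G1_def by (simp add: sum_negf)
  show ?thesis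
  proof (cases "G0 > 0")
    case True
    have d1: "((\<lambda>\<rho>::real. 1+\<rho>) has_real_derivative 1) (at 0)"
      by (auto intro!: derivative_eq_intros)
    have "((\<lambda>\<rho>. G \<rho> powr (1+\<rho>)) has_real_derivative
        (G 0 powr (1+0)) * (1 * ln (G 0) + G1 * (1+0) / G 0)) (at 0)"
      using DERIV_powr[OF dG _ d1] True G00 by simp
    moreover have "(G 0 powr (1+0)) * (1 * ln (G 0) + G1 * (1+0) / G 0)
        = G0 * ln G0 - (\<Sum>u\<in>U. c u * (w u * ln (w u)))"
    proof -
      have "G 0 powr (1+0) = G0" unfolding G00 using True by simp
      moreover have "G0 * (1 * ln G0 + G1 * (1+0) / G0) = G0 * ln G0 + G1"
        using True by (simp add: distrib_left)
      ultimately show ?thesis unfolding G00 G1' by simp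
    qed
    ultimately have "((\<lambda>\<rho>. G \<rho> powr (1+\<rho>)) has_real_derivative
        G0 * ln G0 - (\<Sum>u\<in>U. c u * (w u * ln (w u)))) (at 0)" by (rule back_subst)
    then show ?thesis unfolding G_def G0_def .
  next
    case False
    have "G0 \<ge> 0" unfolding G0_def using assms by (intro sum_nonneg mult_nonneg_nonneg) auto
    then have G0z: "G0 = 0" using False by simp
    have each: "c u * w u = 0" if "u \<in> U" for u
      using G0z assms that unfolding G0_def
      by (subst (asm) sum_nonneg_eq_0_iff) auto
    have "G \<rho> = 0" for \<rho>
      unfolding G_def by (rule sum.neutral) (use each in auto)
    moreover have "(\<Sum>u\<in>U. c u * (w u * ln (w u))) = 0"
      by (rule sum.neutral) (use each in \<open>auto simp: mult.assoc[symmetric]\<close>)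
    ultimately show ?thesis using G0z unfolding G_def G0_def by simp
  qed
qed

definition mm :: "nat set \<Rightarrow> nat set \<Rightarrow> (nat \<Rightarrow> bool) \<Rightarrow> (nat \<Rightarrow> bool) \<Rightarrow> nat \<Rightarrow> bool" where
  "mm A B u v = (\<lambda>j. if j \<in> A then u j else if j \<in> B then v j else False)"

definition Gf :: "real \<Rightarrow> ((nat \<Rightarrow> bool) \<Rightarrow> 'y \<Rightarrow> real) \<Rightarrow> nat set \<Rightarrow> nat set \<Rightarrow> real
   \<Rightarrow> (nat \<Rightarrow> bool) \<Rightarrow> 'y \<Rightarrow> real" where
  "Gf q W A B \<rho> v y = (\<Sum>u\<in>PiE A (\<lambda>_. UNIV). Qp q A u * W (mm A B u v) y powr (1/(1+\<rho>)))"

definition Ff :: "real \<Rightarrow> ((nat \<Rightarrow> bool) \<Rightarrow> 'y::finite \<Rightarrow> real) \<Rightarrow> nat set \<Rightarrow> nat set \<Rightarrow> real \<Rightarrow> real" where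
  "Ff q W A B \<rho> = (\<Sum>v\<in>PiE B (\<lambda>_. UNIV). \<Sum>y\<in>UNIV. Qp q B v * Gf q W A B \<rho> v y powr (1+\<rho>))"

definition G0 :: "real \<Rightarrow> ((nat \<Rightarrow> bool) \<Rightarrow> 'y \<Rightarrow> real) \<Rightarrow> nat set \<Rightarrow> nat set
   \<Rightarrow> (nat \<Rightarrow> bool) \<Rightarrow> 'y \<Rightarrow> real" where
  "G0 q W A B v y = (\<Sum>u\<in>PiE A (\<lambda>_. UNIV). Qp q A u * W (mm A B u v) y)"

definition Dv :: "real \<Rightarrow> ((nat \<Rightarrow> bool) \<Rightarrow> 'y::finite \<Rightarrow> real) \<Rightarrow> nat set \<Rightarrow> nat set \<Rightarrow> real" where
  "Dv q W A B = (\<Sum>v\<in>PiE B (\<lambda>_. UNIV). \<Sum>y\<in>UNIV. Qp q B v *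
     (G0 q W A B v y * ln (G0 q W A B v y) -
      (\<Sum>u\<in>PiE A (\<lambda>_. UNIV). Qp q A u * (W (mm A B u v) y * ln (W (mm A B u v) y)))))"

lemma G0_nonneg:
  assumes "0 \<le> q" "q \<le> 1" "\<forall>x y. W x y \<ge> (0::real)"
  shows "G0 q W A B v y \<ge> 0"
  unfolding G0_def using assms by (intro sum_nonneg mult_nonneg_nonneg Qp_nonneg) auto

lemma Ff_deriv:
  fixes W :: "(nat \<Rightarrow> bool) \<Rightarrow> 'y::finite \<Rightarrow> real"
  assumes "finite A" "finite B" "0 \<le> q" "q \<le> 1" "\<forall>x y. W x y \<ge> 0"
  shows "(Ff q W A B has_real_derivative Dv q W A B) (at 0)"
  unfolding Ff_def Dv_def Gf_def G0_def
  by (intro DERIV_sum DERIV_cmult deriv_G finite_PiE assms(1) Qp_nonneg assms(3,4) assms(5)[rule_format]) simp_all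

lemma G0_sum:
  fixes W :: "(nat \<Rightarrow> bool) \<Rightarrow> 'y::finite \<Rightarrow> real"
  assumes "finite A" "\<forall>x. (\<Sum>y\<in>UNIV. W x y) = 1"
  shows "(\<Sum>y\<in>UNIV. G0 q W A B v y) = 1"
  unfolding G0_def using assms
  by (subst sum.swap) (simp add: sum_distrib_left[symmetric] sum_Qp)

lemma Ff0:
  fixes W :: "(nat \<Rightarrow> bool) \<Rightarrow> 'y::finite \<Rightarrow> real"
  assumes "finite A" "finite B" "\<forall>x y. W x y \<ge> 0" "\<forall>x. (\<Sum>y\<in>UNIV. W x y) = 1"
    "0 \<le> q" "q \<le> 1"
  shows "Ff q W A B 0 = 1"
proof -
  have "Gf q W A B 0 v y powr (1+0) = G0 q W A B v y" for v y
  proof -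
    have "Gf q W A B 0 v y = G0 q W A B v y"
      unfolding Gf_def G0_def using assms(3) by (intro sum.cong) auto
    moreover have "G0 q W A B v y \<ge> 0" by (rule G0_nonneg) (use assms in auto)
    ultimately show ?thesis by simp
  qed
  then have "Ff q W A B 0 = (\<Sum>v\<in>PiE B (\<lambda>_. UNIV). Qp q B v * (\<Sum>y\<in>UNIV. G0 q W A B v y))"
    unfolding Ff_def by (simp add: sum_distrib_left)
  also have "\<dots> = 1" using assms by (simp add: G0_sum sum_Qp)
  finally show ?thesis .
qed

lemma mi_eq:
  fixes W :: "(nat \<Rightarrow> bool) \<Rightarrow> 'y::finite \<Rightarrow> real" and K :: nat
  assumes "finite A" "\<forall>x y. W x y \<ge> 0" "\<forall>x. (\<Sum>y\<in>UNIV. W x y) = 1" "0 \<le> q" "q \<le> 1"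
  defines "B \<equiv> {..<K} - A"
  shows "mi_split q K W A * ln 2 = - Dv q W A B"
proof -
  define U where "U = PiE A (\<lambda>_. UNIV::bool set)"
  define V where "V = PiE B (\<lambda>_. UNIV::bool set)"
  define P where "P = (\<lambda>u (v, y). Qp q A u * Qp q B v * W (mm A B u v) (y::'y))"
  have finB: "finite B" unfolding B_def by auto
  have finU: "finite U" "finite V" unfolding U_def V_def using assms(1) finB by (auto intro: finite_PiE)
  have mi: "mi_split q K W A = finite_mi U (V \<times> UNIV) P"
    unfolding mi_split_def Let_def B_def[symmetric] U_def V_def P_def mm_def ..
  have m1: "(\<Sum>p\<in>V \<times> UNIV. P u p) = Qp q A u" for u
  proof -
    have "(\<Sum>p\<in>V \<times> UNIV. P u p) = (\<Sum>v\<in>V. \<Sum>y\<in>UNIV. Qp q A u * Qp q B v * W (mm A B u v) y)"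
      unfolding P_def by (subst sum.cartesian_product) simp
    also have "\<dots> = (\<Sum>v\<in>V. Qp q A u * Qp q B v)"
      using assms(3) by (simp add: sum_distrib_left[symmetric])
    also have "\<dots> = Qp q A u" unfolding V_def
      using finB by (simp add: sum_distrib_left[symmetric] sum_Qp)
    finally show ?thesis .
  qed
  have m2: "(\<Sum>u\<in>U. P u (v, y)) = Qp q B v * G0 q W A B v y" for v y
    unfolding P_def G0_def U_def by (simp add: sum_distrib_left mult_ac)
  have Qn: "Qp q A u \<ge> 0" "Qp q B v \<ge> 0" for u v using assms Qp_nonneg by auto
  have trm: "(if P u (v, y) = 0 then 0
        else P u (v, y) * log 2 (P u (v, y) / ((\<Sum>p\<in>V \<times> UNIV. P u p) * (\<Sum>u'\<in>U. P u' (v, y)))))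
      = Qp q A u * Qp q B v * W (mm A B u v) y * (ln (W (mm A B u v) y) - ln (G0 q W A B v y)) / ln 2"
    if u: "u \<in> U" for u v y
  proof (cases "P u (v, y) = 0")
    case True
    then show ?thesis unfolding P_def by simp
  next
    case False
    let ?w = "W (mm A B u v) y"
    let ?g = "G0 q W A B v y"
    have pa: "Qp q A u > 0" "Qp q B v > 0" "?w > 0"
      using False Qn(1)[of u] Qn(2)[of v] assms(2) unfolding P_def by (auto simp: order_less_le)
    have "Qp q A u * ?w \<le> ?g"
      unfolding G0_def using u unfolding U_def
      by (rule member_le_sum[where f="\<lambda>u. Qp q A u * W (mm A B u v) y"])
         (use assms Qp_nonneg in \<open>auto intro!: mult_nonneg_nonneg finite_PiE\<close>)
    then have gp: "?g > 0" using pa by (smt (verit) mult_pos_pos)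
    have "P u (v, y) / ((\<Sum>p\<in>V \<times> UNIV. P u p) * (\<Sum>u'\<in>U. P u' (v, y))) = ?w / ?g"
      unfolding m1 m2 unfolding P_def using pa gp by (simp add: field_simps)
    moreover have "log 2 (?w / ?g) = (ln ?w - ln ?g) / ln 2"
      using pa gp by (simp add: log_def ln_div)
    ultimately show ?thesis using False unfolding P_def by simp
  qed
  have fm: "finite_mi U (V \<times> UNIV) P =
      (\<Sum>u\<in>U. \<Sum>p\<in>V \<times> UNIV. (case p of (v, y) \<Rightarrow>
        Qp q A u * Qp q B v * W (mm A B u v) y * (ln (W (mm A B u v) y) - ln (G0 q W A B v y)) / ln 2))"
    unfolding finite_mi_def
  proof (intro sum.cong refl)
    fix u and p :: "(nat \<Rightarrow> bool) \<times> 'y" assume "u \<in> U" "p \<in> V \<times> UNIV"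
    show "(if P u p = 0 then 0 else P u p * log 2 (P u p / (sum (P u) (V \<times> UNIV) * (\<Sum>u'\<in>U. P u' p)))) =
         (case p of (v, y) \<Rightarrow> Qp q A u * Qp q B v * W (mm A B u v) y *
            (ln (W (mm A B u v) y) - ln (G0 q W A B v y)) / ln 2)"
    proof -
      obtain v y where p: "p = (v, y)" by (cases p)
      show ?thesis using trm[of u v y] \<open>u \<in> U\<close> unfolding p by (simp only: prod.case)
    qed
  qed
  have "finite_mi U (V \<times> UNIV) P * ln 2 =
      (\<Sum>u\<in>U. \<Sum>p\<in>V \<times> UNIV. (case p of (v, y) \<Rightarrow>
        Qp q A u * Qp q B v * W (mm A B u v) y * (ln (W (mm A B u v) y) - ln (G0 q W A B v y))))"
    unfolding fm sum_distrib_right by (intro sum.cong refl) auto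
  also have "\<dots> = (\<Sum>u\<in>U. \<Sum>v\<in>V. \<Sum>y\<in>UNIV.
        Qp q A u * Qp q B v * W (mm A B u v) y * (ln (W (mm A B u v) y) - ln (G0 q W A B v y)))"
    by (subst sum.cartesian_product) simp
  also have "\<dots> = (\<Sum>v\<in>V. \<Sum>y\<in>UNIV. \<Sum>u\<in>U.
        Qp q B v * (Qp q A u * (W (mm A B u v) y * ln (W (mm A B u v) y))
          - Qp q A u * W (mm A B u v) y * ln (G0 q W A B v y)))"
  proof -
    have "(\<Sum>u\<in>U. \<Sum>v\<in>V. \<Sum>y\<in>UNIV.
        Qp q A u * Qp q B v * W (mm A B u v) y * (ln (W (mm A B u v) y) - ln (G0 q W A B v y)))
      = (\<Sum>v\<in>V. \<Sum>u\<in>U. \<Sum>y\<in>UNIV.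
        Qp q A u * Qp q B v * W (mm A B u v) y * (ln (W (mm A B u v) y) - ln (G0 q W A B v y)))"
      by (rule sum.swap)
    also have "\<dots> = (\<Sum>v\<in>V. \<Sum>y\<in>UNIV. \<Sum>u\<in>U.
        Qp q A u * Qp q B v * W (mm A B u v) y * (ln (W (mm A B u v) y) - ln (G0 q W A B v y)))"
      by (intro sum.cong refl sum.swap)
    finally show ?thesis by (simp add: algebra_simps)
  qed
  also have "\<dots> = (\<Sum>v\<in>V. \<Sum>y\<in>UNIV. Qp q B v *
        ((\<Sum>u\<in>U. Qp q A u * (W (mm A B u v) y * ln (W (mm A B u v) y)))
          - G0 q W A B v y * ln (G0 q W A B v y)))"
    unfolding G0_def U_def
    by (simp add: sum_distrib_left[symmetric] sum_subtractf sum_distrib_right[symmetric])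
  also have "\<dots> = - Dv q W A B"
    unfolding Dv_def V_def U_def
    by (simp add: sum_negf[symmetric] algebra_simps)
  finally show ?thesis unfolding mi .
qed



lemma amgm_powr:
  fixes x \<rho> :: real
  assumes "x \<ge> 0" "0 < \<rho>" "\<rho> \<le> 1"
  shows "x powr \<rho> \<le> \<rho> * x + (1 - \<rho>)"
proof (cases "x = 0")
  case True then show ?thesis using assms by simp
next
  case False
  then show ?thesis using Youngs_inequality_0[of \<rho> "1-\<rho>" x 1] assms by simp
qed

lemma jensen_powr:
  fixes p h :: "'a \<Rightarrow> real"
  assumes "finite I" "\<And>i. i \<in> I \<Longrightarrow> p i \<ge> 0" "\<And>i. i \<in> I \<Longrightarrow> h i \<ge> 0"
    "(\<Sum>i\<in>I. p i) = 1" "0 < \<rho>" "\<rho> \<le> 1"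
  shows "(\<Sum>i\<in>I. p i * h i powr \<rho>) \<le> (\<Sum>i\<in>I. p i * h i) powr \<rho>"
proof -
  define m where "m = (\<Sum>i\<in>I. p i * h i)"
  have m0: "m \<ge> 0" unfolding m_def using assms by (intro sum_nonneg) auto
  show ?thesis
  proof (cases "m = 0")
    case True
    have each: "p i * h i = 0" if "i \<in> I" for i
      using True assms that unfolding m_def by (subst (asm) sum_nonneg_eq_0_iff) auto
    have "(\<Sum>i\<in>I. p i * h i powr \<rho>) = 0"
      by (rule sum.neutral) (use each in auto)
    then show ?thesis by simp
  next
    case False
    then have mp: "m > 0" using m0 by simp
    have "p i * h i powr \<rho> \<le> p i * (m powr \<rho> * (\<rho> * (h i / m) + (1 - \<rho>)))" if "i \<in> I" for i
    proof (rule mult_left_mono)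
      have "(h i / m) powr \<rho> \<le> \<rho> * (h i / m) + (1 - \<rho>)"
        using amgm_powr[of "h i / m" \<rho>] assms that mp by simp
      moreover have "(h i / m) powr \<rho> = h i powr \<rho> / m powr \<rho>"
        using assms that mp by (simp add: powr_divide)
      ultimately show "h i powr \<rho> \<le> m powr \<rho> * (\<rho> * (h i / m) + (1 - \<rho>))"
        using mp by (simp add: divide_le_eq mult.commute)
      show "0 \<le> p i" using assms that by simp
    qed
    then have "(\<Sum>i\<in>I. p i * h i powr \<rho>) \<le> (\<Sum>i\<in>I. p i * (m powr \<rho> * (\<rho> * (h i / m) + (1 - \<rho>))))"
      by (rule sum_mono)
    also have "\<dots> = (\<Sum>i\<in>I. (m powr \<rho> * (\<rho> / m)) * (p i * h i) + (m powr \<rho> * (1 - \<rho>)) * p i)"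
      by (intro sum.cong refl) (simp add: algebra_simps)
    also have "\<dots> = (m powr \<rho> * (\<rho> / m)) * m + (m powr \<rho> * (1 - \<rho>)) * (\<Sum>i\<in>I. p i)"
      unfolding m_def by (simp add: sum.distrib sum_distrib_left)
    also have "\<dots> = m powr \<rho>"
      using mp assms(4) by (simp add: algebra_simps)
    finally show ?thesis unfolding m_def .
  qed
qed

lemma gallager_core:
  fixes Lt :: real and Ls :: "'a \<Rightarrow> real"
  assumes "finite C" "Lt \<ge> 0" "\<And>j. j \<in> C \<Longrightarrow> Ls j \<ge> 0" "0 < \<rho>" "\<rho> \<le> 1"
  shows "Lt * (\<Sum>j\<in>C. if Ls j \<ge> Lt then 1 else 0) powr \<rho>
     \<le> Lt powr (1/(1+\<rho>)) * (\<Sum>j\<in>C. Ls j powr (1/(1+\<rho>))) powr \<rho>"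
proof (cases "Lt = 0")
  case True then show ?thesis by simp
next
  case False
  then have lp: "Lt > 0" using assms by simp
  define s where "s = 1/(1+\<rho>)"
  have sp: "s > 0" unfolding s_def using assms by simp
  have ind: "(if Ls j \<ge> Lt then 1 else 0) \<le> Ls j powr s / Lt powr s" if "j \<in> C" for j
  proof (cases "Ls j \<ge> Lt")
    case True
    then have "Lt powr s \<le> Ls j powr s" using lp sp by (intro powr_mono2) auto
    then show ?thesis using True lp by simp
  qed (use lp in simp)
  have "(\<Sum>j\<in>C. if Ls j \<ge> Lt then 1 else 0) \<le> (\<Sum>j\<in>C. Ls j powr s) / Lt powr s"
    unfolding sum_divide_distrib by (rule sum_mono) (rule ind)
  then have "(\<Sum>j\<in>C. if Ls j \<ge> Lt then 1 else (0::real)) powr \<rho> \<le> ((\<Sum>j\<in>C. Ls j powr s) / Lt powr s) powr \<rho>"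
    using assms by (intro powr_mono2) (auto intro: sum_nonneg)
  also have "\<dots> = (\<Sum>j\<in>C. Ls j powr s) powr \<rho> / Lt powr (s * \<rho>)"
    using lp by (simp add: powr_divide powr_powr sum_nonneg)
  finally have "Lt * (\<Sum>j\<in>C. if Ls j \<ge> Lt then 1 else (0::real)) powr \<rho>
      \<le> Lt * ((\<Sum>j\<in>C. Ls j powr s) powr \<rho> / Lt powr (s * \<rho>))"
    using lp by (intro mult_left_mono) auto
  also have "\<dots> = Lt powr (1 - s * \<rho>) * (\<Sum>j\<in>C. Ls j powr s) powr \<rho>"
    using lp by (simp add: powr_diff)
  also have "1 - s * \<rho> = s" unfolding s_def using assms by (simp add: field_simps)
  finally show ?thesis unfolding s_def .
qed



lemma mm_cong: "(\<forall>k\<in>A. u k = u' k) \<Longrightarrow> (\<forall>k\<in>B. v k = v' k) \<Longrightarrow> mm A B u v = mm A B u' v'"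
  unfolding mm_def by (auto simp: fun_eq_iff)

lemma Psi_eq:
  fixes W :: "(nat \<Rightarrow> bool) \<Rightarrow> 'y::finite \<Rightarrow> real"
  assumes "A \<subseteq> {..<K}" "B = {..<K} - A" "0 < \<rho>"
    and Wn: "\<forall>x y. W x y \<ge> 0" and q: "0 \<le> q" "q \<le> 1"
  shows "(\<Sum>y\<in>UNIV. \<Sum>x\<in>PiE {..<K} (\<lambda>_. UNIV). Qp q {..<K} x *
      (W (mm A B x x) y powr (1/(1+\<rho>)) *
       (\<Sum>u\<in>PiE A (\<lambda>_. UNIV). Qp q A u * W (mm A B u x) y powr (1/(1+\<rho>))) powr \<rho>))
    = Ff q W A B \<rho>"
proof -
  have finA: "finite A" "finite B" using assms(1,2) finite_subset by auto
  have KAB: "{..<K} = A \<union> B" "A \<inter> B = {}" using assms by auto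
  have inner: "(\<Sum>x\<in>PiE {..<K} (\<lambda>_. UNIV). Qp q {..<K} x *
      (W (mm A B x x) y powr (1/(1+\<rho>)) *
       (\<Sum>u\<in>PiE A (\<lambda>_. UNIV). Qp q A u * W (mm A B u x) y powr (1/(1+\<rho>))) powr \<rho>))
     = (\<Sum>v\<in>PiE B (\<lambda>_. UNIV). Qp q B v * Gf q W A B \<rho> v y powr (1+\<rho>))" for y
  proof -
    have "(\<Sum>x\<in>PiE {..<K} (\<lambda>_. UNIV). Qp q {..<K} x *
      (W (mm A B x x) y powr (1/(1+\<rho>)) *
       (\<Sum>u\<in>PiE A (\<lambda>_. UNIV). Qp q A u * W (mm A B u x) y powr (1/(1+\<rho>))) powr \<rho>))
     = (\<Sum>a\<in>PiE A (\<lambda>_. UNIV). \<Sum>v\<in>PiE B (\<lambda>_. UNIV).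
          Qp q (A \<union> B) (\<lambda>x. if x \<in> A then a x else v x) *
          (W (mm A B (\<lambda>x. if x \<in> A then a x else v x) (\<lambda>x. if x \<in> A then a x else v x)) y powr (1/(1+\<rho>)) *
          (\<Sum>u\<in>PiE A (\<lambda>_. UNIV). Qp q A u * W (mm A B u (\<lambda>x. if x \<in> A then a x else v x)) y powr (1/(1+\<rho>))) powr \<rho>))"
      unfolding KAB(1) by (rule split_PiE[OF finA KAB(2)])
    also have "\<dots> = (\<Sum>a\<in>PiE A (\<lambda>_. UNIV). \<Sum>v\<in>PiE B (\<lambda>_. UNIV).
          Qp q B v * (Qp q A a * W (mm A B a v) y powr (1/(1+\<rho>))) * Gf q W A B \<rho> v y powr \<rho>)"
    proof (intro sum.cong refl)
      fix a v
      have e1: "mm A B (\<lambda>x. if x \<in> A then a x else v x) (\<lambda>x. if x \<in> A then a x else v x) = mm A B a v"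
        by (rule mm_cong) (use KAB in auto)
      have e2: "mm A B u (\<lambda>x. if x \<in> A then a x else v x) = mm A B u v" for u
        by (rule mm_cong) (use KAB in auto)
      show "Qp q (A \<union> B) (\<lambda>x. if x \<in> A then a x else v x) *
          (W (mm A B (\<lambda>x. if x \<in> A then a x else v x) (\<lambda>x. if x \<in> A then a x else v x)) y powr (1/(1+\<rho>)) *
          (\<Sum>u\<in>PiE A (\<lambda>_. UNIV). Qp q A u * W (mm A B u (\<lambda>x. if x \<in> A then a x else v x)) y powr (1/(1+\<rho>))) powr \<rho>)
        = Qp q B v * (Qp q A a * W (mm A B a v) y powr (1/(1+\<rho>))) * Gf q W A B \<rho> v y powr \<rho>"
        unfolding e1 e2 Qp_split[OF finA KAB(2)] Gf_def by (simp add: mult_ac)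
    qed
    also have "\<dots> = (\<Sum>v\<in>PiE B (\<lambda>_. UNIV). Qp q B v * Gf q W A B \<rho> v y * Gf q W A B \<rho> v y powr \<rho>)"
      by (subst sum.swap) (simp add: Gf_def sum_distrib_left sum_distrib_right)
    also have "\<dots> = (\<Sum>v\<in>PiE B (\<lambda>_. UNIV). Qp q B v * Gf q W A B \<rho> v y powr (1+\<rho>))"
    proof (intro sum.cong refl)
      fix v
      show "Qp q B v * Gf q W A B \<rho> v y * Gf q W A B \<rho> v y powr \<rho> = Qp q B v * Gf q W A B \<rho> v y powr (1+\<rho>)"
      proof (cases "Gf q W A B \<rho> v y = 0")
        case True then show ?thesis by simp
      next
        case False
        have "Gf q W A B \<rho> v y \<ge> 0" unfolding Gf_def
          using q by (intro sum_nonneg mult_nonneg_nonneg Qp_nonneg) auto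
        then have "Gf q W A B \<rho> v y powr (1+\<rho>) = Gf q W A B \<rho> v y * Gf q W A B \<rho> v y powr \<rho>"
          using False by (simp add: powr_add)
        then show ?thesis by simp
      qed
    qed
    finally show ?thesis .
  qed
  show ?thesis unfolding inner Ff_def by (rule sum.swap)
qed

lemma expect_bound:
  fixes W :: "(nat \<Rightarrow> bool) \<Rightarrow> 'y::finite \<Rightarrow> real" and f :: "nat \<Rightarrow> nat"
    and g :: "nat set \<Rightarrow> nat \<Rightarrow> nat"
  assumes Wn: "\<forall>x y. W x y \<ge> 0" and q: "0 \<le> q" "q \<le> 1"
    and S: "S \<subseteq> {..<N}" "bij_betw f {..<K} S"
    and A: "A \<subseteq> {..<K}" "B = {..<K} - A"
    and C: "finite C" "\<And>S1. S1 \<in> C \<Longrightarrow> S1 \<subseteq> {..<N} - S \<and> bij_betw (g S1) A S1"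
    and \<rho>: "0 < \<rho>" "\<rho> \<le> 1"
  shows "(\<Sum>X\<in>codebooks N T. Qp q ({..<N}\<times>{..<T}) X *
     (\<Sum>ys\<in>PiE {..<T} (\<lambda>_. UNIV).
        (\<Prod>t<T. W (mm A B (\<lambda>k. X (f k, t)) (\<lambda>k. X (f k, t))) (ys t)) powr (1/(1+\<rho>)) *
        (\<Sum>S1\<in>C. (\<Prod>t<T. W (mm A B (\<lambda>k. X (g S1 k, t)) (\<lambda>k. X (f k, t))) (ys t)) powr (1/(1+\<rho>))) powr \<rho>))
   \<le> real (card C) powr \<rho> * Ff q W A B \<rho> ^ T"
proof -
  define s where "s = 1/(1+\<rho>)"
  define Psi where "Psi = (\<lambda>y. \<Sum>x\<in>PiE {..<K} (\<lambda>_. UNIV). Qp q {..<K} x *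
      (W (mm A B x x) y powr s *
       (\<Sum>u\<in>PiE A (\<lambda>_. UNIV). Qp q A u * W (mm A B u x) y powr s) powr \<rho>))"
  define F where "F = (\<lambda>X ys.
        (\<Prod>t<T. W (mm A B (\<lambda>k. X (f k, t)) (\<lambda>k. X (f k, t))) (ys t)) powr s *
        (\<Sum>S1\<in>C. (\<Prod>t<T. W (mm A B (\<lambda>k. X (g S1 k, t)) (\<lambda>k. X (f k, t))) (ys t)) powr s) powr \<rho>)"
  have finA: "finite A" using A finite_subset by auto
  have finS: "finite S" using S finite_subset by auto
  have key: "(\<Sum>X\<in>codebooks N T. Qp q ({..<N}\<times>{..<T}) X * F X ys)
      \<le> real (card C) powr \<rho> * (\<Prod>t<T. Psi (ys t))" for ys
  proof -
    define I where "I = S \<times> {..<T}"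
    define J where "J = ({..<N} - S) \<times> {..<T}"
    have IJ: "{..<N} \<times> {..<T} = I \<union> J" "I \<inter> J = {}" unfolding I_def J_def using S(1) by auto
    have finIJ: "finite I" "finite J" unfolding I_def J_def using finS by auto
    have fS: "f k \<in> S" if "k < K" for k using S(2) that by (auto dest: bij_betwE)
    have gS: "g S1 k \<in> {..<N} - S" if "S1 \<in> C" "k \<in> A" for S1 k
      using C(2)[OF that(1)] that(2) by (auto dest: bij_betwE)
    define LtA where "LtA = (\<lambda>a. \<Prod>t<T. W (mm A B (\<lambda>k. a (f k, t)) (\<lambda>k. a (f k, t))) (ys t))"
    define LsB where "LsB = (\<lambda>a b S1. \<Prod>t<T. W (mm A B (\<lambda>k. b (g S1 k, t)) (\<lambda>k. a (f k, t))) (ys t))"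
    define H where "H = (\<lambda>a t. \<Sum>u\<in>PiE A (\<lambda>_. UNIV). Qp q A u *
            W (mm A B u (\<lambda>k. a (f k, t))) (ys t) powr s)"
    define \<phi> where "\<phi> = (\<lambda>t x. W (mm A B x x) (ys t) powr s *
       (\<Sum>u\<in>PiE A (\<lambda>_. UNIV). Qp q A u * W (mm A B u x) (ys t) powr s) powr \<rho>)"
    have k1: "(\<Sum>X\<in>codebooks N T. Qp q ({..<N}\<times>{..<T}) X * F X ys)
      = (\<Sum>a\<in>PiE I (\<lambda>_. UNIV). \<Sum>b\<in>PiE J (\<lambda>_. UNIV).
          Qp q I a * (LtA a powr s * (Qp q J b * (\<Sum>S1\<in>C. LsB a b S1 powr s) powr \<rho>)))"
    proof -
      have "(\<Sum>X\<in>codebooks N T. Qp q ({..<N}\<times>{..<T}) X * F X ys)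
        = (\<Sum>a\<in>PiE I (\<lambda>_. UNIV). \<Sum>b\<in>PiE J (\<lambda>_. UNIV).
           Qp q (I \<union> J) (\<lambda>x. if x \<in> I then a x else b x) * F (\<lambda>x. if x \<in> I then a x else b x) ys)"
        unfolding codebooks_def IJ(1) by (rule split_PiE[OF finIJ IJ(2)])
      also have "\<dots> = (\<Sum>a\<in>PiE I (\<lambda>_. UNIV). \<Sum>b\<in>PiE J (\<lambda>_. UNIV).
          Qp q I a * (LtA a powr s * (Qp q J b * (\<Sum>S1\<in>C. LsB a b S1 powr s) powr \<rho>)))"
      proof (intro sum.cong refl)
        fix a b :: "nat \<times> nat \<Rightarrow> bool"
        let ?M = "\<lambda>x. if x \<in> I then a x else b x"
        have e1: "(\<Prod>t<T. W (mm A B (\<lambda>k. ?M (f k, t)) (\<lambda>k. ?M (f k, t))) (ys t)) = LtA a"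
          unfolding LtA_def
        proof (intro prod.cong refl arg_cong2[where f=W] refl)
          fix t assume "t \<in> {..<T}"
          then have "(f k, t) \<in> I" if "k \<in> A \<or> k \<in> B" for k
            using fS[of k] that A unfolding I_def by auto
          then show "mm A B (\<lambda>k. ?M (f k, t)) (\<lambda>k. ?M (f k, t)) = mm A B (\<lambda>k. a (f k, t)) (\<lambda>k. a (f k, t))"
            by (intro mm_cong) auto
        qed
        have e2: "(\<Sum>S1\<in>C. (\<Prod>t<T. W (mm A B (\<lambda>k. ?M (g S1 k, t)) (\<lambda>k. ?M (f k, t))) (ys t)) powr s)
           = (\<Sum>S1\<in>C. LsB a b S1 powr s)"
          unfolding LsB_def
        proof (intro sum.cong refl arg_cong2[where f="(powr)"] prod.cong arg_cong2[where f=W])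
          fix S1 t assume S1: "S1 \<in> C" and t: "t \<in> {..<T}"
          have "(f k, t) \<in> I" if "k \<in> B" for k
            using fS[of k] that A t unfolding I_def by auto
          moreover have "(g S1 k, t) \<notin> I" if "k \<in> A" for k
            using gS[OF S1 that] unfolding I_def by auto
          ultimately show "mm A B (\<lambda>k. ?M (g S1 k, t)) (\<lambda>k. ?M (f k, t)) = mm A B (\<lambda>k. b (g S1 k, t)) (\<lambda>k. a (f k, t))"
            by (intro mm_cong) auto
        qed
        show "Qp q (I \<union> J) ?M * F ?M ys = Qp q I a * (LtA a powr s * (Qp q J b * (\<Sum>S1\<in>C. LsB a b S1 powr s) powr \<rho>))"
          unfolding F_def e1 e2 Qp_split[OF finIJ IJ(2)] by (simp add: mult_ac)
      qed
      finally show ?thesis .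
    qed
    have k2: "(\<Sum>b\<in>PiE J (\<lambda>_. UNIV). Qp q J b * (\<Sum>S1\<in>C. LsB a b S1 powr s) powr \<rho>)
        \<le> (\<Sum>b\<in>PiE J (\<lambda>_. UNIV). Qp q J b * (\<Sum>S1\<in>C. LsB a b S1 powr s)) powr \<rho>" for a
      by (rule jensen_powr) (use finIJ q \<rho> in \<open>auto intro!: Qp_nonneg sum_nonneg finite_PiE simp: sum_Qp\<close>)
    have k3: "(\<Sum>b\<in>PiE J (\<lambda>_. UNIV). Qp q J b * (\<Sum>S1\<in>C. LsB a b S1 powr s))
        = real (card C) * (\<Prod>t<T. H a t)" for a
    proof -
      have one: "(\<Sum>b\<in>PiE J (\<lambda>_. UNIV). Qp q J b * LsB a b S1 powr s) = (\<Prod>t<T. H a t)"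
        if S1: "S1 \<in> C" for S1
      proof -
        have "(\<Sum>b\<in>PiE J (\<lambda>_. UNIV). Qp q J b *
            (\<Prod>t\<in>{..<T}. (\<lambda>t u. W (mm A B u (\<lambda>k. a (f k, t))) (ys t) powr s) t (\<lambda>k. b ((\<lambda>t k. (g S1 k, t)) t k))))
          = (\<Prod>t\<in>{..<T}. \<Sum>u\<in>PiE A (\<lambda>_. UNIV). Qp q A u *
               (\<lambda>t u. W (mm A B u (\<lambda>k. a (f k, t))) (ys t) powr s) t u)"
        proof (rule indep_blocks)
          show "finite {..<T}" "finite J" "finite A" using finIJ finA by auto
          show "inj_on (\<lambda>k. (g S1 k, t)) A" for t
            using C(2)[OF S1] by (auto simp: bij_betw_def inj_on_def)
          show "(\<lambda>k. (g S1 k, t)) ` A \<subseteq> J" if "t \<in> {..<T}" for t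
            using gS[OF S1] that unfolding J_def by auto
          show "(\<lambda>k. (g S1 k, t)) ` A \<inter> (\<lambda>k. (g S1 k, t')) ` A = {}" if "t \<noteq> t'" for t t'
            using that by auto
          show "(\<lambda>t u. W (mm A B u (\<lambda>k. a (f k, t))) (ys t) powr s) t u =
              (\<lambda>t u. W (mm A B u (\<lambda>k. a (f k, t))) (ys t) powr s) t u'" if "\<forall>k\<in>A. u k = u' k" for t u u'
          proof -
            have "mm A B u (\<lambda>k. a (f k, t)) = mm A B u' (\<lambda>k. a (f k, t))"
              using that by (auto intro!: mm_cong)
            then show ?thesis by simp
          qed
        qed
        then show ?thesis unfolding LsB_def H_def by (simp add: prod_powr_distrib)
      qed
      have "(\<Sum>b\<in>PiE J (\<lambda>_. UNIV). Qp q J b * (\<Sum>S1\<in>C. LsB a b S1 powr s))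
          = (\<Sum>S1\<in>C. \<Sum>b\<in>PiE J (\<lambda>_. UNIV). Qp q J b * LsB a b S1 powr s)"
        by (simp add: sum_distrib_left sum.swap[of _ C])
      also have "\<dots> = (\<Sum>S1\<in>C. \<Prod>t<T. H a t)" by (intro sum.cong refl one)
      finally show ?thesis by simp
    qed
    have k4: "Qp q I a * (LtA a powr s * (real (card C) * (\<Prod>t<T. H a t)) powr \<rho>)
       = real (card C) powr \<rho> * (Qp q I a * (\<Prod>t<T. \<phi> t (\<lambda>k. a (f k, t))))" for a
    proof -
      have "(\<Prod>t<T. \<phi> t (\<lambda>k. a (f k, t))) =
          (\<Prod>t<T. W (mm A B (\<lambda>k. a (f k, t)) (\<lambda>k. a (f k, t))) (ys t) powr s) * (\<Prod>t<T. H a t powr \<rho>)"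
        unfolding \<phi>_def H_def by (simp add: prod.distrib)
      then show ?thesis unfolding LtA_def by (simp add: powr_mult prod_powr_distrib mult_ac)
    qed
    have k5: "(\<Sum>a\<in>PiE I (\<lambda>_. UNIV). Qp q I a * (\<Prod>t<T. \<phi> t (\<lambda>k. a (f k, t))))
       = (\<Prod>t<T. Psi (ys t))"
    proof -
      have "(\<Sum>a\<in>PiE I (\<lambda>_. UNIV). Qp q I a * (\<Prod>t\<in>{..<T}. \<phi> t (\<lambda>k. a ((\<lambda>t k. (f k, t)) t k))))
        = (\<Prod>t\<in>{..<T}. \<Sum>u\<in>PiE {..<K} (\<lambda>_. UNIV). Qp q {..<K} u * \<phi> t u)"
      proof (rule indep_blocks)
        show "finite {..<T}" "finite I" "finite {..<K}" using finIJ by auto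
        show "inj_on (\<lambda>k. (f k, t)) {..<K}" for t
          using S(2) by (auto simp: bij_betw_def inj_on_def)
        show "(\<lambda>k. (f k, t)) ` {..<K} \<subseteq> I" if "t \<in> {..<T}" for t
          using fS that unfolding I_def by auto
        show "(\<lambda>k. (f k, t)) ` {..<K} \<inter> (\<lambda>k. (f k, t')) ` {..<K} = {}" if "t \<noteq> t'" for t t'
          using that by auto
        show "\<phi> t u = \<phi> t u'" if "\<forall>k\<in>{..<K}. u k = u' k" for t u u'
        proof -
          have "mm A B u u = mm A B u' u'" "\<And>v. mm A B v u = mm A B v u'"
            using that A by (auto intro!: mm_cong)
          then show ?thesis unfolding \<phi>_def by simp
        qed
      qed
      then show ?thesis unfolding Psi_def \<phi>_def by simp
    qed
    have "(\<Sum>X\<in>codebooks N T. Qp q ({..<N}\<times>{..<T}) X * F X ys)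
       = (\<Sum>a\<in>PiE I (\<lambda>_. UNIV). Qp q I a * (LtA a powr s *
            (\<Sum>b\<in>PiE J (\<lambda>_. UNIV). Qp q J b * (\<Sum>S1\<in>C. LsB a b S1 powr s) powr \<rho>)))"
      unfolding k1 by (simp add: sum_distrib_left)
    also have "\<dots> \<le> (\<Sum>a\<in>PiE I (\<lambda>_. UNIV). Qp q I a * (LtA a powr s *
            (\<Sum>b\<in>PiE J (\<lambda>_. UNIV). Qp q J b * (\<Sum>S1\<in>C. LsB a b S1 powr s)) powr \<rho>))"
      by (intro sum_mono mult_left_mono k2 Qp_nonneg q) auto
    also have "\<dots> = (\<Sum>a\<in>PiE I (\<lambda>_. UNIV). real (card C) powr \<rho> * (Qp q I a * (\<Prod>t<T. \<phi> t (\<lambda>k. a (f k, t)))))"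
      unfolding k3 k4 ..
    also have "\<dots> = real (card C) powr \<rho> * (\<Prod>t<T. Psi (ys t))"
      by (simp add: sum_distrib_left[symmetric] k5)
    finally show ?thesis .
  qed
  have "(\<Sum>X\<in>codebooks N T. Qp q ({..<N}\<times>{..<T}) X * (\<Sum>ys\<in>PiE {..<T} (\<lambda>_. UNIV). F X ys))
      = (\<Sum>ys\<in>PiE {..<T} (\<lambda>_. UNIV). \<Sum>X\<in>codebooks N T. Qp q ({..<N}\<times>{..<T}) X * F X ys)"
    by (simp add: sum_distrib_left sum.swap[of _ "codebooks N T"])
  also have "\<dots> \<le> (\<Sum>ys\<in>PiE {..<T} (\<lambda>_. UNIV). real (card C) powr \<rho> * (\<Prod>t<T. Psi (ys t)))"
    by (intro sum_mono key)
  also have "\<dots> = real (card C) powr \<rho> * (\<Prod>t<T. \<Sum>y\<in>UNIV. Psi y)"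
  proof -
    have "(\<Prod>t<T. \<Sum>y\<in>UNIV. Psi y) = (\<Sum>ys\<in>PiE {..<T} (\<lambda>_. UNIV). \<Prod>t<T. Psi (ys t))"
      by (rule prod_sum_PiE) auto
    then show ?thesis by (simp add: sum_distrib_left[symmetric])
  qed
  also have "(\<Sum>y\<in>UNIV. Psi y) = Ff q W A B \<rho>"
    unfolding Psi_def s_def by (rule Psi_eq[OF A \<rho>(1) Wn q])
  finally show ?thesis unfolding F_def s_def by simp
qed



lemma W_sym_bij:
  fixes W :: "(nat \<Rightarrow> bool) \<Rightarrow> 'y \<Rightarrow> real"
  assumes sym: "\<forall>\<pi> x y. \<pi> permutes {..<K} \<longrightarrow> W (x \<circ> \<pi>) y = W x y"
    and f': "bij_betw f' {..<K} S'"
  shows "W (test_input S' X t) y = W (\<lambda>k. if k < K then X (f' k, t) else False) y"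
proof -
  have finS: "finite S'" using f' bij_betw_finite by blast
  have cS: "card S' = K" using f' by (simp add: bij_betw_same_card[symmetric])
  define f0 where "f0 = (!) (sorted_list_of_set S')"
  have f0: "bij_betw f0 {..<K} S'"
    unfolding f0_def by (rule bij_betw_nth) (use finS cS in auto)
  define \<pi> where "\<pi> = (\<lambda>k. if k < K then inv_into {..<K} f0 (f' k) else k)"
  have "bij_betw (inv_into {..<K} f0 \<circ> f') {..<K} {..<K}"
    by (rule bij_betw_trans[OF f' bij_betw_inv_into[OF f0]])
  then have "bij_betw \<pi> {..<K} {..<K}"
    by (rule bij_betw_cong[THEN iffD1, rotated]) (auto simp: \<pi>_def)
  then have perm: "\<pi> permutes {..<K}"
    by (rule bij_imp_permutes) (auto simp: \<pi>_def)
  have eq: "test_input S' X t \<circ> \<pi> = (\<lambda>k. if k < K then X (f' k, t) else False)"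
  proof
    fix k
    show "(test_input S' X t \<circ> \<pi>) k = (if k < K then X (f' k, t) else False)"
    proof (cases "k < K")
      case True
      have fk: "f' k \<in> S'" using f' True by (auto dest: bij_betwE)
      have "inv_into {..<K} f0 (f' k) < K"
        using bij_betw_inv_into[OF f0] fk by (auto dest: bij_betwE)
      moreover have "f0 (inv_into {..<K} f0 (f' k)) = f' k"
        using f0 fk by (simp add: bij_betw_def f_inv_into_f)
      ultimately show ?thesis using True unfolding test_input_def \<pi>_def f0_def cS by simp
    next
      case False
      then show ?thesis unfolding test_input_def \<pi>_def cS by simp
    qed
  qed
  show ?thesis using sym perm eq by metis
qed

lemma lik_S_eq:
  assumes "A \<subseteq> {..<K}" "B = {..<K} - A" "card S = K"
  shows "lik T W S X ys = (\<Prod>t<T. W (mm A B (\<lambda>k. X (sorted_list_of_set S ! k, t))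
                                           (\<lambda>k. X (sorted_list_of_set S ! k, t))) (ys t))"
  unfolding lik_def test_input_def
proof (intro prod.cong refl arg_cong2[where f=W])
  show "(\<lambda>k. if k < card S then X (sorted_list_of_set S ! k, t) else False) =
    mm A B (\<lambda>k. X (sorted_list_of_set S ! k, t)) (\<lambda>k. X (sorted_list_of_set S ! k, t))" for t
    using assms unfolding mm_def by (auto simp: fun_eq_iff)
qed

lemma lik_S'_eq:
  fixes W :: "(nat \<Rightarrow> bool) \<Rightarrow> 'y \<Rightarrow> real"
  assumes sym: "\<forall>\<pi> x y. \<pi> permutes {..<K} \<longrightarrow> W (x \<circ> \<pi>) y = W x y"
    and f: "bij_betw f {..<K} S" and A: "A \<subseteq> {..<K}" "B = {..<K} - A"
    and g: "bij_betw g A S1" and disj: "S1 \<inter> S = {}"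
  shows "lik T W (f ` B \<union> S1) X ys = (\<Prod>t<T. W (mm A B (\<lambda>k. X (g k, t)) (\<lambda>k. X (f k, t))) (ys t))"
proof -
  define f' where "f' = (\<lambda>k. if k \<in> A then g k else f k)"
  have b1: "bij_betw f' A S1" using g by (rule bij_betw_cong[THEN iffD1, rotated]) (simp add: f'_def)
  have "bij_betw f B (f ` B)" using f A by (intro bij_betw_subset[OF f]) auto
  then have b2: "bij_betw f' B (f ` B)"
    by (rule bij_betw_cong[THEN iffD1, rotated]) (use A in \<open>simp add: f'_def\<close>)
  have "f ` B \<subseteq> S" using f A by (auto dest: bij_betwE)
  then have "bij_betw f' (A \<union> B) (S1 \<union> f ` B)" using disj by (intro bij_betw_combine[OF b1 b2]) auto
  moreover have "A \<union> B = {..<K}" "S1 \<union> f ` B = f ` B \<union> S1" using A by auto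
  ultimately have bf': "bij_betw f' {..<K} (f ` B \<union> S1)" by simp
  show ?thesis unfolding lik_def
  proof (intro prod.cong refl)
    fix t
    have "W (test_input (f ` B \<union> S1) X t) (ys t) = W (\<lambda>k. if k < K then X (f' k, t) else False) (ys t)"
      by (rule W_sym_bij[OF sym bf'])
    also have "(\<lambda>k. if k < K then X (f' k, t) else False) = mm A B (\<lambda>k. X (g k, t)) (\<lambda>k. X (f k, t))"
      using A unfolding mm_def f'_def by (auto simp: fun_eq_iff)
    finally show "W (test_input (f ` B \<union> S1) X t) (ys t) = W (mm A B (\<lambda>k. X (g k, t)) (\<lambda>k. X (f k, t))) (ys t)" .
  qed
qed

lemma decomp:
  assumes f: "bij_betw f {..<K} S" and S'': "card S'' = K" "S'' \<noteq> S" "finite S''"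
  defines "A0 \<equiv> {k\<in>{..<K}. f k \<notin> S''}"
  shows "A0 \<noteq> {}" "card (S'' - S) = card A0" "S'' = f ` ({..<K} - A0) \<union> (S'' - S)"
proof -
  have finS: "finite S" using f bij_betw_finite by blast
  have img: "f ` ({..<K} - A0) = S \<inter> S''"
    using f unfolding A0_def bij_betw_def by auto
  show "S'' = f ` ({..<K} - A0) \<union> (S'' - S)" unfolding img by auto
  have inj: "inj_on f ({..<K} - A0)" using f unfolding bij_betw_def by (auto intro: inj_on_subset)
  have "card (S \<inter> S'') = card ({..<K} - A0)" unfolding img[symmetric] by (rule card_image[OF inj])
  also have "\<dots> = K - card A0" by (subst card_Diff_subset) (auto simp: A0_def)
  finally have c1: "card (S \<inter> S'') = K - card A0" .
  have "card S'' = card (S \<inter> S'') + card (S'' - S)"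
    using S''(3) by (metis Int_commute card_Int_Diff)
  moreover have "card A0 \<le> K" using card_mono[of "{..<K}" A0] unfolding A0_def by auto
  ultimately show "card (S'' - S) = card A0" using S''(1) c1 by simp
  show "A0 \<noteq> {}"
  proof
    assume "A0 = {}"
    then have "S \<subseteq> S''" using img f unfolding bij_betw_def by auto
    moreover have "card S = card S''" using f S''(1) by (simp add: bij_betw_same_card[symmetric])
    ultimately show False using S'' card_subset_eq by blast
  qed
qed

lemma per_S_bound:
  fixes W :: "(nat \<Rightarrow> bool) \<Rightarrow> 'y::finite \<Rightarrow> real" and \<rho> :: "nat set \<Rightarrow> real"
  assumes Wn: "\<forall>x y. W x y \<ge> 0" and q: "0 \<le> q" "q \<le> 1"
    and sym: "\<forall>\<pi> x y. \<pi> permutes {..<K} \<longrightarrow> W (x \<circ> \<pi>) y = W x y"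
    and S: "S \<subseteq> {..<N}" "card S = K"
    and \<rho>: "\<And>A. 0 < \<rho> A" "\<And>A. \<rho> A \<le> 1"
  shows "(\<Sum>X\<in>codebooks N T. Qp q ({..<N} \<times> {..<T}) X *
          (\<Sum>ys\<in>PiE {..<T} (\<lambda>_. (UNIV :: 'y set)).
             lik T W S X ys * (if ml_error N T W S X ys then 1 else 0)))
     \<le> (\<Sum>A\<in>{A. A \<subseteq> {..<K} \<and> A \<noteq> {}}. real ((N - K) choose card A) powr \<rho> A * Ff q W A ({..<K} - A) (\<rho> A) ^ T)"
proof -
  define As where "As = {A. A \<subseteq> {..<K} \<and> A \<noteq> {}}"
  have finAs: "finite As" unfolding As_def by (rule finite_subset[of _ "Pow {..<K}"]) auto
  have finS: "finite S" using S finite_subset by auto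
  define f where "f = (\<lambda>k. sorted_list_of_set S ! k)"
  have f: "bij_betw f {..<K} S" unfolding f_def by (rule bij_betw_nth) (use finS S in auto)
  define CC where "CC = (\<lambda>A::nat set. {S1. S1 \<subseteq> {..<N} - S \<and> card S1 = card A})"
  have finCC: "finite (CC A)" for A unfolding CC_def by (rule finite_subset[of _ "Pow ({..<N} - S)"]) auto
  have cardCC: "card (CC A) = (N - K) choose card A" for A
  proof -
    have "card ({..<N} - S) = N - K" using S by (simp add: card_Diff_subset finS)
    then show ?thesis unfolding CC_def using n_subsets[of "{..<N} - S" "card A"] by simp
  qed
  define gg where "gg = (\<lambda>(A::nat set) (S1::nat set). SOME g. bij_betw g A S1)"
  have gg: "bij_betw (gg A S1) A S1" if "A \<in> As" "S1 \<in> CC A" for A S1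
  proof -
    have "finite A" using that unfolding As_def using finite_subset by auto
    moreover have "finite S1" using that unfolding CC_def using finite_subset by auto
    ultimately have "\<exists>g. bij_betw g A S1" using that unfolding CC_def by (intro finite_same_card_bij) auto
    then show ?thesis unfolding gg_def by (rule someI_ex)
  qed
  define LsA where "LsA = (\<lambda>A X ys S1. \<Prod>t<T. W (mm A ({..<K} - A) (\<lambda>k. X (gg A S1 k, t)) (\<lambda>k. X (f k, t))) ((ys::nat \<Rightarrow> 'y) t))"
  define trmA where "trmA = (\<lambda>A X ys. lik T W S X ys powr (1/(1+\<rho> A)) *
      (\<Sum>S1\<in>CC A. LsA A X ys S1 powr (1/(1+\<rho> A))) powr \<rho> A)"
  have point: "lik T W S X ys * (if ml_error N T W S X ys then 1 else 0) \<le> (\<Sum>A\<in>As. trmA A X ys)" for X ys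
  proof -
    have Lt0: "lik T W S X ys \<ge> 0" unfolding lik_def using Wn by (intro prod_nonneg) auto
    have Ls0: "LsA A X ys S1 \<ge> 0" for A S1 unfolding LsA_def using Wn by (intro prod_nonneg) auto
    have tn: "trmA A X ys \<ge> 0" for A unfolding trmA_def by simp
    show ?thesis
    proof (cases "ml_error N T W S X ys")
      case False
      then show ?thesis using tn by (simp add: sum_nonneg)
    next
      case True
      then obtain S'' where S'': "S'' \<subseteq> {..<N}" "card S'' = card S" "S'' \<noteq> S"
          "lik T W S'' X ys \<ge> lik T W S X ys" unfolding ml_error_def by blast
      have finS'': "finite S''" using S''(1) finite_subset by auto
      define A0 where "A0 = {k\<in>{..<K}. f k \<notin> S''}"
      have d: "A0 \<noteq> {}" "card (S'' - S) = card A0" "S'' = f ` ({..<K} - A0) \<union> (S'' - S)"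
        using decomp[OF f _ S''(3) finS''] S''(2) S(2) unfolding A0_def by auto
      have A0: "A0 \<in> As" using d(1) unfolding As_def A0_def by auto
      have S10: "S'' - S \<in> CC A0" unfolding CC_def using S''(1) d(2) by auto
      have "lik T W S'' X ys = LsA A0 X ys (S'' - S)"
        unfolding LsA_def
        by (subst d(3), rule lik_S'_eq[OF sym f _ refl gg[OF A0 S10]]) (auto simp: A0_def)
      then have ge: "LsA A0 X ys (S'' - S) \<ge> lik T W S X ys" using S''(4) by simp
      have "1 \<le> (\<Sum>S1\<in>CC A0. if LsA A0 X ys S1 \<ge> lik T W S X ys then 1 else (0::real))"
      proof -
        have "(if LsA A0 X ys (S'' - S) \<ge> lik T W S X ys then 1 else (0::real))
            \<le> (\<Sum>S1\<in>CC A0. if LsA A0 X ys S1 \<ge> lik T W S X ys then 1 else (0::real))"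
          by (rule member_le_sum[OF S10]) (auto simp: finCC)
        then show ?thesis using ge by simp
      qed
      then have "1 \<le> (\<Sum>S1\<in>CC A0. if LsA A0 X ys S1 \<ge> lik T W S X ys then 1 else (0::real)) powr \<rho> A0"
        using \<rho>(1)[of A0] by (intro ge_one_powr_ge_zero) auto
      then have "lik T W S X ys * (if ml_error N T W S X ys then 1 else 0)
          \<le> lik T W S X ys * (\<Sum>S1\<in>CC A0. if LsA A0 X ys S1 \<ge> lik T W S X ys then 1 else (0::real)) powr \<rho> A0"
        using True Lt0 by (simp add: mult_le_cancel_left1)
      also have "\<dots> \<le> trmA A0 X ys"
        unfolding trmA_def by (rule gallager_core[OF finCC Lt0 Ls0 \<rho>])
      also have "\<dots> \<le> (\<Sum>A\<in>As. trmA A X ys)"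
        by (rule member_le_sum[OF A0]) (use tn finAs in auto)
      finally show ?thesis .
    qed
  qed
  have "(\<Sum>X\<in>codebooks N T. Qp q ({..<N} \<times> {..<T}) X *
          (\<Sum>ys\<in>PiE {..<T} (\<lambda>_. (UNIV :: 'y set)).
             lik T W S X ys * (if ml_error N T W S X ys then 1 else 0)))
     \<le> (\<Sum>X\<in>codebooks N T. Qp q ({..<N} \<times> {..<T}) X *
          (\<Sum>ys\<in>PiE {..<T} (\<lambda>_. (UNIV :: 'y set)). \<Sum>A\<in>As. trmA A X ys))"
    by (intro sum_mono mult_left_mono point Qp_nonneg q)
  also have "\<dots> = (\<Sum>A\<in>As. \<Sum>X\<in>codebooks N T. Qp q ({..<N} \<times> {..<T}) X *
          (\<Sum>ys\<in>PiE {..<T} (\<lambda>_. (UNIV :: 'y set)). trmA A X ys))"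
    by (simp add: sum_distrib_left sum.swap[of _ As])
  also have "\<dots> \<le> (\<Sum>A\<in>As. real ((N - K) choose card A) powr \<rho> A * Ff q W A ({..<K} - A) (\<rho> A) ^ T)"
  proof (rule sum_mono)
    fix A assume A: "A \<in> As"
    have AK: "A \<subseteq> {..<K}" using A unfolding As_def by auto
    have "(\<Sum>X\<in>codebooks N T. Qp q ({..<N} \<times> {..<T}) X *
          (\<Sum>ys\<in>PiE {..<T} (\<lambda>_. (UNIV :: 'y set)). trmA A X ys))
        \<le> real (card (CC A)) powr \<rho> A * Ff q W A ({..<K} - A) (\<rho> A) ^ T"
      unfolding trmA_def LsA_def lik_S_eq[OF AK refl S(2)] f_def[symmetric]
      by (rule expect_bound[OF Wn q S(1) f AK refl finCC _ \<rho>])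
         (use gg[OF A] in \<open>auto simp: CC_def\<close>)
    then show "(\<Sum>X\<in>codebooks N T. Qp q ({..<N} \<times> {..<T}) X *
          (\<Sum>ys\<in>PiE {..<T} (\<lambda>_. (UNIV :: 'y set)). trmA A X ys))
        \<le> real ((N - K) choose card A) powr \<rho> A * Ff q W A ({..<K} - A) (\<rho> A) ^ T"
      unfolding cardCC .
  qed
  finally show ?thesis unfolding As_def .
qed



lemma choose_rho:
  fixes W :: "(nat \<Rightarrow> bool) \<Rightarrow> 'y::finite \<Rightarrow> real"
  assumes "finite A" "finite B" "0 \<le> q" "q \<le> 1" "\<forall>x y. W x y \<ge> 0" "\<forall>x. (\<Sum>y\<in>UNIV. W x y) = 1"
    and c: "c < - Dv q W A B"
  shows "\<exists>\<rho>. 0 < \<rho> \<and> \<rho> \<le> 1 \<and> Ff q W A B \<rho> \<le> 1 - \<rho> * c"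
proof -
  have d: "(Ff q W A B has_real_derivative Dv q W A B) (at 0)" by (rule Ff_deriv) (use assms in auto)
  have F0: "Ff q W A B 0 = 1" by (rule Ff0) (use assms in auto)
  have lim: "(\<lambda>h. (Ff q W A B (0 + h) - Ff q W A B 0) / h) \<midarrow>0\<rightarrow> Dv q W A B"
    using d unfolding DERIV_def .
  obtain s where s: "s > 0" "\<And>x. x \<noteq> 0 \<and> norm (x - 0) < s \<Longrightarrow>
      norm ((Ff q W A B (0 + x) - Ff q W A B 0) / x - Dv q W A B) < - Dv q W A B - c"
    using LIM_D[OF lim, of "- Dv q W A B - c"] c by auto
  define h where "h = min (s/2) 1"
  have h: "0 < h" "h \<le> 1" "h < s" using s unfolding h_def by auto
  have "norm ((Ff q W A B h - 1) / h - Dv q W A B) < - Dv q W A B - c"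
    using s(2)[of h] h F0 by simp
  then have "(Ff q W A B h - 1) / h < - c" by simp
  then have "Ff q W A B h - 1 < - c * h" using h by (simp add: divide_less_eq)
  then show ?thesis using h by (intro exI[of _ h]) (auto simp: algebra_simps)
qed

lemma binom_grow:
  assumes "1 \<le> i"
  shows "filterlim (\<lambda>N. real ((N - K) choose i)) at_top sequentially"
  unfolding filterlim_at_top
proof
  fix Z :: real
  define N0 where "N0 = K + i + nat \<lceil>Z\<rceil> * i"
  have "Z \<le> real ((N - K) choose i)" if "N \<ge> N0" for N
  proof -
    define n where "n = N - K"
    have ni: "n \<ge> i" "n \<ge> nat \<lceil>Z\<rceil> * i" using that unfolding n_def N0_def by auto
    have ip: "real i > 0" using assms by simp
    have "Z \<le> real (nat \<lceil>Z\<rceil>)" by linarith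
    also have "\<dots> \<le> real n / real i"
      using ni(2) ip by (simp add: le_divide_eq of_nat_mult[symmetric] del: of_nat_mult)
    also have "\<dots> \<le> (real n / real i) ^ i"
      using ni(1) ip assms by (intro self_le_power) (auto simp: le_divide_eq)
    also have "\<dots> \<le> real (n choose i)" by (rule binomial_ge_n_over_k_pow_k) (use ni in auto)
    finally show ?thesis unfolding n_def .
  qed
  then show "eventually (\<lambda>N. Z \<le> real ((N - K) choose i)) sequentially"
    unfolding eventually_sequentially by blast
qed

lemma Ff_nonneg:
  assumes "0 \<le> q" "q \<le> 1" "\<forall>x y. W x y \<ge> (0::real)"
  shows "Ff q W A B \<rho> \<ge> 0"
  unfolding Ff_def using assms by (intro sum_nonneg mult_nonneg_nonneg Qp_nonneg) auto

lemma avg_bound: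
  fixes W :: "(nat \<Rightarrow> bool) \<Rightarrow> 'y::finite \<Rightarrow> real" and \<rho> :: "nat set \<Rightarrow> real"
  assumes Wn: "\<forall>x y. W x y \<ge> 0" and q: "0 \<le> q" "q \<le> 1"
    and sym: "\<forall>\<pi> x y. \<pi> permutes {..<K} \<longrightarrow> W (x \<circ> \<pi>) y = W x y"
    and KN: "K \<le> N"
    and \<rho>: "\<And>A. 0 < \<rho> A" "\<And>A. \<rho> A \<le> 1"
  shows "avg_err q W N K T
     \<le> (\<Sum>A\<in>{A. A \<subseteq> {..<K} \<and> A \<noteq> {}}. real ((N - K) choose card A) powr \<rho> A * Ff q W A ({..<K} - A) (\<rho> A) ^ T)"
proof -
  define Bd where "Bd = (\<Sum>A\<in>{A. A \<subseteq> {..<K} \<and> A \<noteq> {}}. real ((N - K) choose card A) powr \<rho> A * Ff q W A ({..<K} - A) (\<rho> A) ^ T)"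
  define SS where "SS = {S. S \<subseteq> {..<N} \<and> card S = K}"
  have cSS: "card SS = N choose K" unfolding SS_def using n_subsets[of "{..<N}" K] by simp
  have pos: "real (N choose K) > 0" using KN by simp
  have "(\<Sum>S\<in>SS. \<Sum>X\<in>codebooks N T. Qp q ({..<N} \<times> {..<T}) X *
          (\<Sum>ys\<in>PiE {..<T} (\<lambda>_. (UNIV :: 'y set)).
             lik T W S X ys * (if ml_error N T W S X ys then 1 else 0))) \<le> (\<Sum>S\<in>SS. Bd)"
    unfolding Bd_def SS_def by (intro sum_mono per_S_bound[OF Wn q sym _ _ \<rho>]) auto
  also have "\<dots> = real (N choose K) * Bd" using cSS by simp
  finally show ?thesis unfolding avg_err_def SS_def[symmetric] Bd_def[symmetric]
    using pos by (simp add: divide_le_eq mult.commute)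
qed

lemma avg_nonneg:
  fixes W :: "(nat \<Rightarrow> bool) \<Rightarrow> 'y::finite \<Rightarrow> real"
  assumes Wn: "\<forall>x y. W x y \<ge> 0" and q: "0 \<le> q" "q \<le> 1"
  shows "avg_err q W N K T \<ge> 0"
  unfolding avg_err_def lik_def using assms
  by (intro divide_nonneg_nonneg sum_nonneg mult_nonneg_nonneg Qp_nonneg prod_nonneg) auto

lemma limA:
  fixes q \<delta> :: real and K :: nat
    and W :: "(nat \<Rightarrow> bool) \<Rightarrow> 'y::finite \<Rightarrow> real"
    and T :: "nat \<Rightarrow> nat"
  assumes q: "0 \<le> q" "q \<le> 1" and K: "K \<ge> 1"
    and Wn: "\<forall>x y. W x y \<ge> 0"
    and Ws: "\<forall>x. (\<Sum>y\<in>UNIV. W x y) = 1"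
    and \<delta>: "\<delta> > 0"
    and hyp: "eventually (\<lambda>N. real (T N) * mi_split q K W A
             \<ge> (1 + \<delta>) * log 2 (real K * real ((N - K) choose card A) * real (K choose card A)))
         sequentially"
    and A: "A \<subseteq> {..<K}" "A \<noteq> {}"
  shows "\<exists>\<rho>. 0 < \<rho> \<and> \<rho> \<le> 1 \<and>
     (\<lambda>N. real ((N - K) choose card A) powr \<rho> * Ff q W A ({..<K} - A) \<rho> ^ T N) \<longlonglongrightarrow> 0"
proof -
  define i where "i = card A"
  define B where "B = {..<K} - A"
  define mi where "mi = mi_split q K W A"
  define M where "M = (\<lambda>N. real ((N - K) choose i))"
  have finA: "finite A" using A finite_subset by auto
  have i: "1 \<le> i" "i \<le> K" unfolding i_def using A finA card_mono[of "{..<K}" A]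
    by (auto simp: Suc_le_eq card_gt_0_iff)
  have Mlim: "filterlim M at_top sequentially" unfolding M_def by (rule binom_grow[OF i(1)])
  have ev2: "eventually (\<lambda>N. M N \<ge> 2) sequentially" using Mlim unfolding filterlim_at_top by blast
  have KC: "real K * real (K choose i) \<ge> 1"
  proof -
    have "K choose i \<ge> 1" using i by (simp add: Suc_le_eq)
    then have "K * (K choose i) \<ge> 1" using K by (simp add: Suc_le_eq)
    then show ?thesis by (metis of_nat_1 of_nat_le_iff of_nat_mult)
  qed
  have logM: "log 2 (real K * M N * real (K choose i)) \<ge> log 2 (M N)" if "M N \<ge> 2" for N
  proof -
    have le: "M N \<le> real K * M N * real (K choose i)"
      using KC that mult_right_mono[OF KC, of "M N"] by (simp add: mult_ac)
    have pos: "0 < real K * M N * real (K choose i)" using le that by linarith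
    show ?thesis using le pos that by (subst log_le_cancel_iff) auto
  qed
  have ev: "eventually (\<lambda>N. real (T N) * mi \<ge> (1 + \<delta>) * log 2 (M N) \<and> M N \<ge> 2) sequentially"
    using eventually_conj[OF hyp ev2]
  proof (rule eventually_mono)
    fix N assume h: "(1 + \<delta>) * log 2 (real K * real ((N - K) choose card A) * real (K choose card A))
                  \<le> real (T N) * mi_split q K W A \<and> 2 \<le> M N"
    then have "(1 + \<delta>) * log 2 (M N) \<le> (1 + \<delta>) * log 2 (real K * M N * real (K choose i))"
      using logM[of N] \<delta> by (intro mult_left_mono) auto
    also have "\<dots> \<le> real (T N) * mi" using h unfolding M_def mi_def i_def by simp
    finally show "real (T N) * mi \<ge> (1 + \<delta>) * log 2 (M N) \<and> M N \<ge> 2" using h by simp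
  qed
  have mipos: "mi > 0"
  proof -
    obtain N where N: "real (T N) * mi \<ge> (1 + \<delta>) * log 2 (M N)" "M N \<ge> 2"
      using eventually_happens[OF ev] by auto
    have "log 2 (M N) \<ge> 1" using N(2) by simp
    then have "(1 + \<delta>) * log 2 (M N) > 0" using \<delta> by (intro mult_pos_pos) auto
    then have "real (T N) * mi > 0" using N(1) by linarith
    then show ?thesis by (simp add: zero_less_mult_iff)
  qed
  define a where "a = (1 + \<delta>/2) / (1 + \<delta>)"
  have a: "0 < a" "a < 1" unfolding a_def using \<delta> by auto
  define c where "c = ln 2 * mi * a"
  have Dv: "- Dv q W A B = ln 2 * mi"
    using mi_eq[OF finA Wn Ws q, of K] unfolding B_def mi_def by (simp only: mult.commute)
  have "c < - Dv q W A B" unfolding Dv c_def using a mipos by simp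
  obtain \<rho> where \<rho>: "0 < \<rho>" "\<rho> \<le> 1" "Ff q W A B \<rho> \<le> 1 - \<rho> * c"
  proof -
    have "finite B" unfolding B_def by simp
    from choose_rho[OF finA this q Wn Ws \<open>c < - Dv q W A B\<close>] that show ?thesis by blast
  qed
  have F0: "Ff q W A B \<rho> \<ge> 0" by (rule Ff_nonneg[OF q Wn])
  define e where "e = \<rho> * \<delta> / 2"
  have e: "e > 0" unfolding e_def using \<rho> \<delta> by simp
  have bound: "M N powr \<rho> * Ff q W A B \<rho> ^ T N \<le> M N powr (- e)"
    if h: "real (T N) * mi \<ge> (1 + \<delta>) * log 2 (M N)" "M N \<ge> 2" for N
  proof -
    have Mp: "M N > 0" using h by simp
    have "Ff q W A B \<rho> ^ T N \<le> (1 - \<rho> * c) ^ T N" using F0 \<rho>(3) by (intro power_mono) auto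
    also have "\<dots> \<le> exp (- (\<rho> * c)) ^ T N"
      using F0 \<rho>(3) exp_ge_add_one_self[of "- (\<rho> * c)"] by (intro power_mono) auto
    also have "\<dots> = exp (- (\<rho> * c * real (T N)))" by (simp add: exp_of_nat_mult[symmetric] mult_ac)
    also have "\<dots> \<le> exp (- (\<rho> * (1 + \<delta>/2) * ln (M N)))"
    proof -
      have "c * real (T N) = ln 2 * a * (real (T N) * mi)" unfolding c_def by (simp add: mult_ac)
      also have "\<dots> \<ge> ln 2 * a * ((1 + \<delta>) * log 2 (M N))"
        using h(1) a by (intro mult_left_mono) auto
      finally have "c * real (T N) \<ge> ln 2 * a * ((1 + \<delta>) * log 2 (M N))" .
      moreover have "ln 2 * a * ((1 + \<delta>) * log 2 (M N)) = (1 + \<delta>/2) * ln (M N)"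
      proof -
        have "a * (1 + \<delta>) = 1 + \<delta>/2" unfolding a_def using \<delta> by (simp add: field_simps)
        moreover have "ln 2 * log 2 (M N) = ln (M N)" by (simp add: log_def)
        moreover have "ln 2 * a * ((1 + \<delta>) * log 2 (M N)) = (a * (1 + \<delta>)) * (ln 2 * log 2 (M N))"
          by (simp add: mult_ac)
        ultimately show ?thesis by simp
      qed
      ultimately have "c * real (T N) \<ge> (1 + \<delta>/2) * ln (M N)" by simp
      then have "\<rho> * c * real (T N) \<ge> \<rho> * ((1 + \<delta>/2) * ln (M N))"
        using \<rho> by (simp add: mult.assoc mult_left_mono)
      then show ?thesis by (simp add: mult.assoc)
    qed
    also have "\<dots> = M N powr (- (\<rho> * (1 + \<delta>/2)))" using Mp by (simp add: powr_def)
    finally have "M N powr \<rho> * Ff q W A B \<rho> ^ T N \<le> M N powr \<rho> * M N powr (- (\<rho> * (1 + \<delta>/2)))"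
      by (intro mult_left_mono) auto
    also have "\<dots> = M N powr (- e)" unfolding e_def by (simp add: powr_add[symmetric] algebra_simps)
    finally show ?thesis .
  qed
  have "(\<lambda>N. M N powr \<rho> * Ff q W A B \<rho> ^ T N) \<longlonglongrightarrow> 0"
  proof (rule tendsto_sandwich[of "\<lambda>_. 0" _ _ "\<lambda>N. M N powr (- e)"])
    show "eventually (\<lambda>N. 0 \<le> M N powr \<rho> * Ff q W A B \<rho> ^ T N) sequentially"
      using F0 by auto
    show "eventually (\<lambda>N. M N powr \<rho> * Ff q W A B \<rho> ^ T N \<le> M N powr (- e)) sequentially"
      using ev by (rule eventually_mono) (use bound in auto)
    show "(\<lambda>N. M N powr (- e)) \<longlonglongrightarrow> 0" using e by (intro tendsto_neg_powr Mlim) auto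
  qed simp
  then show ?thesis using \<rho> unfolding M_def B_def i_def by blast
qed

theorem theorem1:
  fixes q \<delta> :: real and K :: nat
    and W :: "(nat \<Rightarrow> bool) \<Rightarrow> 'y::finite \<Rightarrow> real"
    and T :: "nat \<Rightarrow> nat"
  assumes "0 \<le> q" and "q \<le> 1" and "K \<ge> 1"
    and "\<forall>x y. W x y \<ge> 0"
    and "\<forall>x. (\<Sum>y\<in>UNIV. W x y) = 1"
    and "\<forall>\<pi> x y. \<pi> permutes {..<K} \<longrightarrow> W (x \<circ> \<pi>) y = W x y"
    and "\<delta> > 0"
    and "eventually (\<lambda>N. \<forall>i\<in>{1..K}. \<forall>A. A \<subseteq> {..<K} \<and> card A = i \<longrightarrow>
           real (T N) * mi_split q K W A
             \<ge> (1 + \<delta>) * log 2 (real K * real ((N - K) choose i) * real (K choose i)))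
         sequentially"
  shows "(\<lambda>N. avg_err q W N K (T N)) \<longlonglongrightarrow> 0"
proof -
  note q = assms(1,2) and K = assms(3) and Wn = assms(4) and Ws = assms(5) and sym = assms(6)
    and \<delta> = assms(7) and hyp = assms(8)
  define As where "As = {A. A \<subseteq> {..<K} \<and> A \<noteq> {}}"
  have finAs: "finite As" unfolding As_def by (rule finite_subset[of _ "Pow {..<K}"]) auto
  have "\<forall>A\<in>As. \<exists>\<rho>. 0 < \<rho> \<and> \<rho> \<le> 1 \<and>
     (\<lambda>N. real ((N - K) choose card A) powr \<rho> * Ff q W A ({..<K} - A) \<rho> ^ T N) \<longlonglongrightarrow> 0"
  proof
    fix A assume A: "A \<in> As"
    then have AK: "A \<subseteq> {..<K}" "A \<noteq> {}" unfolding As_def by auto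
    have finA: "finite A" using AK finite_subset by auto
    have ci: "card A \<in> {1..K}" using AK finA card_mono[of "{..<K}" A]
      by (auto simp: Suc_le_eq card_gt_0_iff)
    have h: "eventually (\<lambda>N. real (T N) * mi_split q K W A
             \<ge> (1 + \<delta>) * log 2 (real K * real ((N - K) choose card A) * real (K choose card A)))
         sequentially"
      using hyp by (rule eventually_mono) (use AK ci in blast)
    show "\<exists>\<rho>. 0 < \<rho> \<and> \<rho> \<le> 1 \<and>
     (\<lambda>N. real ((N - K) choose card A) powr \<rho> * Ff q W A ({..<K} - A) \<rho> ^ T N) \<longlonglongrightarrow> 0"
      by (rule limA[OF q K Wn Ws \<delta> h AK])
  qed
  then obtain \<rho>0 where \<rho>0: "\<And>A. A \<in> As \<Longrightarrow> 0 < \<rho>0 A \<and> \<rho>0 A \<le> 1 \<and>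
     (\<lambda>N. real ((N - K) choose card A) powr \<rho>0 A * Ff q W A ({..<K} - A) (\<rho>0 A) ^ T N) \<longlonglongrightarrow> 0"
    by metis
  define \<rho> where "\<rho> = (\<lambda>A. if A \<in> As then \<rho>0 A else 1)"
  have \<rho>b: "0 < \<rho> A" "\<rho> A \<le> 1" for A using \<rho>0[of A] unfolding \<rho>_def by auto
  have lim: "(\<lambda>N. \<Sum>A\<in>As. real ((N - K) choose card A) powr \<rho> A * Ff q W A ({..<K} - A) (\<rho> A) ^ T N) \<longlonglongrightarrow> 0"
    by (rule tendsto_null_sum) (use \<rho>0 in \<open>auto simp: \<rho>_def\<close>)
  show ?thesis
  proof (rule tendsto_sandwich[OF _ _ tendsto_const lim])
    show "eventually (\<lambda>N. 0 \<le> avg_err q W N K (T N)) sequentially"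
      using avg_nonneg[OF Wn q] by auto
    show "eventually (\<lambda>N. avg_err q W N K (T N) \<le>
        (\<Sum>A\<in>As. real ((N - K) choose card A) powr \<rho> A * Ff q W A ({..<K} - A) (\<rho> A) ^ T N)) sequentially"
      unfolding eventually_sequentially As_def
      by (intro exI[of _ K] allI impI avg_bound[OF Wn q sym _ \<rho>b])
  qed
qed


end
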